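(* Let $\theta_0\in\,]0,\pi/2[$ and $\kappa>0$, and define $F(\theta)=G'(\theta)\tan\theta-G(\theta)$ for $\theta\in[\theta_0,\pi/2[$. Then for every $z\in\,]-\infty,\,e^{-\kappa}-1]$ the equation $F(\theta)=z$ has a unique solution $\theta=\varphi(z)\in[\theta_0,\pi/2[$.
   Context: For $\theta\in[\theta_0,\pi/2]$, $G(\theta)=\Big(1-\exp\Big\{\frac{-\kappa}{\cos(\theta-\theta_0)}\Big\}\Big)\cos(\theta-\theta_0)$. *)

theory Defs
  imports "HOL-Analysis.Analysis"
begin

definition G :: "real \<Rightarrow> real \<Rightarrow> real \<Rightarrow> real" where
  "G \<kappa> \<theta>\<^sub>0 \<theta> = (1 - exp (- \<kappa> / cos (\<theta> - \<theta>\<^sub>0))) * cos (\<theta> - \<theta>\<^sub>0)"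

definition F :: "real \<Rightarrow> real \<Rightarrow> real \<Rightarrow> real" where
  "F \<kappa> \<theta>\<^sub>0 \<theta> = deriv (G \<kappa> \<theta>\<^sub>0) \<theta> * tan \<theta> - G \<kappa> \<theta>\<^sub>0 \<theta>"

end

theory Submission imports Defs begin
definition g1 :: "real \<Rightarrow> real \<Rightarrow> real \<Rightarrow> real" where
 "g1 k t0 t = - (1 - exp(-k/cos(t-t0)) * (1 + k/cos(t-t0))) * sin(t-t0)"
definition g2 :: "real \<Rightarrow> real \<Rightarrow> real \<Rightarrow> real" where
 "g2 k t0 t = - exp(-k/cos(t-t0)) * k^2 * sin(t-t0)^2 / cos(t-t0)^3 - (1 - exp(-k/cos(t-t0))*(1+k/cos(t-t0))) * cos(t-t0)"

lemma G_deriv: "cos(t-t0) \<noteq> 0 \<Longrightarrow> (G k t0 has_real_derivative g1 k t0 t) (at t)"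
proof -
  assume a: "cos(t-t0) \<noteq> 0"
  have "((\<lambda>t. (1 - exp (- k / cos (t - t0))) * cos (t - t0)) has_real_derivative g1 k t0 t) (at t)"
    using a by (auto intro!: derivative_eq_intros simp: g1_def field_simps power2_eq_square power3_eq_cube)
  then show ?thesis by (simp add: G_def[abs_def])
qed

lemma g1_deriv: "cos(t-t0) \<noteq> 0 \<Longrightarrow> (g1 k t0 has_real_derivative g2 k t0 t) (at t)"
proof -
  assume a: "cos(t-t0) \<noteq> 0"
  have "((\<lambda>t. - (1 - exp(-k/cos(t-t0)) * (1 + k/cos(t-t0))) * sin(t-t0)) has_real_derivative g2 k t0 t) (at t)"
    using a by (auto intro!: derivative_eq_intros simp: g2_def field_simps power2_eq_square power3_eq_cube)
  then show ?thesis by (simp add: g1_def[abs_def])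
qed

lemma A_pos: "0 < (x::real) \<Longrightarrow> exp(-x)*(1+x) < 1"
proof -
  assume x: "0 < x"
  have "1 + x < exp x" using exp_minus_greater[of "-x"] x by simp
  hence "exp(-x)*(1+x) < exp(-x) * exp x" by (rule mult_strict_left_mono) simp
  also have "exp(-x) * exp x = 1" by (simp add: exp_add[symmetric])
  finally show ?thesis .
qed

lemma basics:
  assumes "0 < t0" "t0 < pi/2" "t0 \<le> t" "t < pi/2"
  shows "cos(t-t0) > 0" "sin(t-t0) \<ge> 0" "cos t > 0" "tan t > 0" "cos t \<le> 1"
  using assms by (auto intro!: cos_gt_zero_pi sin_ge_zero tan_gt_zero)

lemma g1_nonpos:
  assumes "0 < k" "0 < t0" "t0 < pi/2" "t0 \<le> t" "t < pi/2"
  shows "g1 k t0 t \<le> 0"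
proof -
  note b = basics[OF assms(2-5)]
  have "exp(-(k/cos(t-t0)))*(1+k/cos(t-t0)) < 1" using b assms by (intro A_pos) simp
  hence "(exp(-(k/cos(t-t0)))*(1+k/cos(t-t0)) - 1) * sin(t-t0) \<le> 0"
    using b by (intro mult_nonpos_nonneg) auto
  thus ?thesis by (simp add: g1_def algebra_simps)
qed

lemma g2_neg:
  assumes "0 < k" "0 < t0" "t0 < pi/2" "t0 \<le> t" "t < pi/2"
  shows "g2 k t0 t < 0"
proof -
  note b = basics[OF assms(2-5)]
  have "exp(-(k/cos(t-t0)))*(1+k/cos(t-t0)) < 1" using b assms by (intro A_pos) simp
  moreover have "exp(-k/cos(t-t0)) * k^2 * sin(t-t0)^2 / cos(t-t0)^3 \<ge> 0" using b by simp
  moreover have "(1 - exp(-k/cos(t-t0))*(1+k/cos(t-t0))) * cos(t-t0) > 0"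
    using b calculation(1) by (intro mult_pos_pos) auto
  ultimately show ?thesis by (simp add: g2_def)
qed

definition Fe where "Fe k t0 t = g1 k t0 t * tan t - G k t0 t"

lemma F_eq:
  assumes "0 < t0" "t0 < pi/2" "t0 \<le> t" "t < pi/2"
  shows "F k t0 t = Fe k t0 t"
proof -
  note b = basics[OF assms]
  have "deriv (G k t0) t = g1 k t0 t" using G_deriv[of t t0 k] b by (intro DERIV_imp_deriv) simp
  thus ?thesis by (simp add: F_def Fe_def)
qed

lemma Fe_deriv:
  assumes "0 < k" "0 < t0" "t0 < pi/2" "t0 \<le> t" "t < pi/2"
  shows "\<exists>y. (Fe k t0 has_real_derivative y) (at t) \<and> y < 0"
proof -
  note b = basics[OF assms(2-5)]
  have d: "(Fe k t0 has_real_derivative g2 k t0 t * tan t + g1 k t0 t * inverse((cos t)^2) - g1 k t0 t) (at t)"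
    unfolding Fe_def[abs_def]
    using b G_deriv[of t t0 k] g1_deriv[of t t0 k]
    by (auto intro!: derivative_eq_intros)
  have "(cos t)^2 \<le> 1" using b by (simp add: power_le_one)
  hence "inverse((cos t)^2) \<ge> inverse 1" using b by (intro le_imp_inverse_le) auto
  hence "inverse((cos t)^2) \<ge> 1" by simp
  hence "g1 k t0 t * (inverse((cos t)^2) - 1) \<le> 0"
    using g1_nonpos[OF assms] by (intro mult_nonpos_nonneg) auto
  hence "g1 k t0 t * inverse((cos t)^2) - g1 k t0 t \<le> 0" by (simp add: algebra_simps)
  moreover have "g2 k t0 t * tan t < 0" using g2_neg[OF assms] b by (simp add: mult_neg_pos)
  ultimately show ?thesis using d by (intro exI[of _ "g2 k t0 t * tan t + g1 k t0 t * inverse((cos t)^2) - g1 k t0 t"]) simp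
qed

lemma Fe_decr:
  assumes "0 < k" "0 < t0" "t0 < pi/2" "t0 \<le> x" "x < y" "y < pi/2"
  shows "Fe k t0 y < Fe k t0 x"
  using assms by (intro DERIV_neg_imp_decreasing[of x y] Fe_deriv) auto

lemma g1_decr:
  assumes "0 < k" "0 < t0" "t0 < pi/2" "t0 \<le> x" "x < y" "y < pi/2"
  shows "g1 k t0 y < g1 k t0 x"
proof (rule DERIV_neg_imp_decreasing[of x y])
  fix t assume t: "x \<le> t" "t \<le> y"
  hence b: "cos (t - t0) > 0" using assms basics(1)[of t0 t] by auto
  show "\<exists>d. (g1 k t0 has_real_derivative d) (at t) \<and> d < 0"
    using g1_deriv[of t t0 k] b g2_neg[of k t0 t] assms t by auto
qed (use assms in auto)

theorem lemma3p2:
  fixes \<kappa> \<theta>\<^sub>0 z :: real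
  assumes "0 < \<theta>\<^sub>0" "\<theta>\<^sub>0 < pi / 2" "0 < \<kappa>"
    and "z \<le> exp (- \<kappa>) - 1"
  shows "\<exists>!\<theta>. \<theta> \<in> {\<theta>\<^sub>0..<pi / 2} \<and> F \<kappa> \<theta>\<^sub>0 \<theta> = z"
proof -
  define k where "k = \<kappa>"
  define t0 where "t0 = \<theta>\<^sub>0"
  have k: "0 < k" and t0: "0 < t0" "t0 < pi/2" and z: "z \<le> exp (-k) - 1"
    using assms by (auto simp: k_def t0_def)
  define t1 where "t1 = (t0 + pi/2) / 2"
  have t1: "t0 < t1" "t1 < pi/2" using t0 by (auto simp: t1_def)
  have g10: "g1 k t0 t0 = 0" by (simp add: g1_def)
  have g11: "g1 k t0 t1 < 0" using g1_decr[OF k t0 order.refl t1] g10 by simp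
  have tan1: "tan t1 > 0" using t0 t1 by (intro tan_gt_zero) auto
  define M where "M = max (tan t1) (z / g1 k t0 t1)"
  define t2 where "t2 = arctan M"
  have M: "M > 0" "M \<ge> z / g1 k t0 t1" using tan1 by (auto simp: M_def)
  have "arctan (tan t1) \<le> arctan M" by (simp add: M_def arctan_le_iff)
  hence t2a: "t1 \<le> t2" using arctan_tan[of t1] t1 t0 by (simp add: t2_def)
  have t2b: "t2 < pi/2" unfolding t2_def by (rule arctan_ubound)
  have tant2: "tan t2 = M" by (simp add: t2_def tan_arctan)
  have g12: "g1 k t0 t2 \<le> g1 k t0 t1"
    using g1_decr[OF k t0, of t1 t2] t1 t2a t2b by (cases "t1 = t2") auto
  have c2: "cos (t2 - t0) > 0" using basics(1)[OF t0, of t2] t1 t2a t2b by auto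
  have "exp (- k / cos (t2 - t0)) < 1" using c2 k by simp
  hence G2: "G k t0 t2 \<ge> 0" using c2 by (simp add: G_def)
  have "Fe k t0 t2 \<le> g1 k t0 t2 * M" using G2 tant2 by (simp add: Fe_def)
  also have "\<dots> \<le> g1 k t0 t1 * M" using g12 M by (intro mult_right_mono) auto
  also have "\<dots> \<le> g1 k t0 t1 * (z / g1 k t0 t1)" using g11 M by (intro mult_left_mono_neg) auto
  also have "\<dots> = z" using g11 by simp
  finally have Fe2: "Fe k t0 t2 \<le> z" .
  have Fe0: "Fe k t0 t0 = exp (-k) - 1" by (simp add: Fe_def g10 G_def)
  have "\<exists>x. t0 \<le> x \<and> x \<le> t2 \<and> Fe k t0 x = z"
  proof (rule IVT2[of "Fe k t0" t2 z t0, OF Fe2])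
    show "z \<le> Fe k t0 t0" using Fe0 z by simp
    show "t0 \<le> t2" using t1 t2a by simp
    show "\<forall>x. t0 \<le> x \<and> x \<le> t2 \<longrightarrow> isCont (Fe k t0) x"
      using Fe_deriv[OF k t0] t2b by (metis DERIV_isCont order_le_less_trans)
  qed
  then obtain x where x: "t0 \<le> x" "x \<le> t2" "Fe k t0 x = z" by blast
  have ex: "x \<in> {t0..<pi/2} \<and> F k t0 x = z" using x t2b F_eq[OF t0, of x k] by auto
  have uniq: "y = x" if y: "y \<in> {t0..<pi/2} \<and> F k t0 y = z" for y
  proof -
    have "Fe k t0 y = z" using y F_eq[OF t0, of y k] by auto
    moreover have "Fe k t0 x = z" by fact
    ultimately show ?thesis using Fe_decr[OF k t0, of x y] Fe_decr[OF k t0, of y x] x y t2b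
      by (cases "x < y"; cases "y < x") auto
  qed
  show ?thesis unfolding k_def[symmetric] t0_def[symmetric] using ex uniq by blast
qed

end
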